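(* Let $G=(V,E)$ be a connected graph with $n$ vertices, $\tau$ a set of types with $|\tau|=k>1$, $f:\tau\to\mathbb{Q}_{\ge1}$ a fitness function, and $\alpha\in\tau^+(f)$. Let $f^*=\max\{f(j): j\in\tau\setminus\{\alpha\}\}$ and suppose $f^*<f(\alpha)=f^+$. Let $M$ be a Moran process $M(G,\tau,f,M_0)$ and suppose that $V_\alpha(t)\notin\{\emptyset,V\}$ for a non-negative integer $t$. Then (conditional on $M_t$) $\mathbb{E}(\Psi_\alpha(M_{t+1})-\Psi_\alpha(M_t))>(1-f^*/f^+)/n^3$.
   Context: $f^+=\max_{i\in\tau}f(i)$, $\tau^+(f)=\{i:f(i)=f^+\}$. For $G=(V,E)$, $N(v)$ is the neighbourhood and $d(v)=|N(v)|$. For a state $S:V\to\tau$, $S|_{v\to w}$ equals $S$ except $w$ gets type $S(v)$. The Moran process $M(G,\tau,f,M_0)$: Markov chain on states from $M_0$; given $M_t$, choose $v$ with probability $f(M_t(v))/\sum_uf(M_t(u))$, then $w\in N(v)$ uniformly, and set $M_{t+1}=M_t|_{v\to w}$. $V_j(t)=\{v: M_t(v)=j\}$. The potential $\Psi_j(S)=\sum_{v:S(v)=j}1/d(v)$. *)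

theory Defs
  imports Complex_Main
begin

definition simple_graph :: "'v set \<Rightarrow> ('v \<Rightarrow> 'v \<Rightarrow> bool) \<Rightarrow> bool" where
  "simple_graph V E \<longleftrightarrow> finite V \<and> (\<forall>u w. E u w \<longrightarrow> u \<in> V \<and> w \<in> V)
     \<and> (\<forall>u w. E u w \<longrightarrow> E w u) \<and> (\<forall>u. \<not> E u u)"

definition connected_graph :: "'v set \<Rightarrow> ('v \<Rightarrow> 'v \<Rightarrow> bool) \<Rightarrow> bool" where
  "connected_graph V E \<longleftrightarrow> V \<noteq> {} \<and>
     (\<forall>u\<in>V. \<forall>w\<in>V. (u, w) \<in> {(x, y). E x y}\<^sup>*)"

definition nbhd :: "'v set \<Rightarrow> ('v \<Rightarrow> 'v \<Rightarrow> bool) \<Rightarrow> 'v \<Rightarrow> 'v set" where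
  "nbhd V E v = {w \<in> V. E v w}"

definition deg :: "'v set \<Rightarrow> ('v \<Rightarrow> 'v \<Rightarrow> bool) \<Rightarrow> 'v \<Rightarrow> nat" where
  "deg V E v = card (nbhd V E v)"

definition reproduce :: "('v \<Rightarrow> 't) \<Rightarrow> 'v \<Rightarrow> 'v \<Rightarrow> ('v \<Rightarrow> 't)" where
  "reproduce S v w = S(w := S v)"

definition types_set :: "'v set \<Rightarrow> ('v \<Rightarrow> 't) \<Rightarrow> 't \<Rightarrow> 'v set" where
  "types_set V S j = {v \<in> V. S v = j}"

definition Psi :: "'v set \<Rightarrow> ('v \<Rightarrow> 'v \<Rightarrow> bool) \<Rightarrow> 't \<Rightarrow> ('v \<Rightarrow> 't) \<Rightarrow> real" where
  "Psi V E j S = (\<Sum>v\<in>types_set V S j. 1 / real (deg V E v))"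

definition total_fitness :: "'v set \<Rightarrow> ('t \<Rightarrow> real) \<Rightarrow> ('v \<Rightarrow> 't) \<Rightarrow> real" where
  "total_fitness V f S = (\<Sum>u\<in>V. f (S u))"

text \<open>Expected one-step change E(g(M_{t+1}) - g(M_t) | M_t = S) of the Moran process:
  v is chosen with probability f(S v)/total fitness, then w uniformly in N(v),
  and the new state is S|_{v->w}.\<close>
definition moran_drift :: "'v set \<Rightarrow> ('v \<Rightarrow> 'v \<Rightarrow> bool) \<Rightarrow> ('t \<Rightarrow> real)
     \<Rightarrow> (('v \<Rightarrow> 't) \<Rightarrow> real) \<Rightarrow> ('v \<Rightarrow> 't) \<Rightarrow> real" where
  "moran_drift V E f g S =
     (\<Sum>v\<in>V. \<Sum>w\<in>nbhd V E v.
        (f (S v) / total_fitness V f S) * (1 / real (deg V E v)) * (g (reproduce S v w) - g S))"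

end

theory Submission
  imports Defs
begin

theorem lemma12:
  fixes V :: "'v set" and E :: "'v \<Rightarrow> 'v \<Rightarrow> bool"
    and \<tau> :: "'t set" and f :: "'t \<Rightarrow> real" and \<alpha> :: 't and S :: "'v \<Rightarrow> 't"
  assumes graph: "simple_graph V E" and conn: "connected_graph V E"
    and types_fin: "finite \<tau>" and types_card: "card \<tau> > 1"
    and fit: "\<forall>j\<in>\<tau>. f j \<in> \<rat> \<and> f j \<ge> 1"
    and alpha_in: "\<alpha> \<in> \<tau>" and alpha_max: "f \<alpha> = Max (f ` \<tau>)"
    and fstar: "Max (f ` (\<tau> - {\<alpha>})) < f \<alpha>"
    and state: "\<forall>v\<in>V. S v \<in> \<tau>"
    and nontriv: "types_set V S \<alpha> \<noteq> {}" "types_set V S \<alpha> \<noteq> V"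
  shows "moran_drift V E f (Psi V E \<alpha>) S
           > (1 - Max (f ` (\<tau> - {\<alpha>})) / Max (f ` \<tau>)) / real (card V) ^ 3"
proof -
  define A where "A = types_set V S \<alpha>"
  define F where "F = total_fitness V f S"
  define d where "d = deg V E"
  define fs where "fs = Max (f ` (\<tau> - {\<alpha>}))"
  define n where "n = card V"
  have finV: "finite V" and EV: "\<And>u w. E u w \<Longrightarrow> u \<in> V \<and> w \<in> V"
    and Esym: "\<And>u w. E u w \<Longrightarrow> E w u" and Eirr: "\<And>u. \<not> E u u"
    using graph unfolding simple_graph_def by auto
  have AV: "A \<subseteq> V" unfolding A_def types_set_def by auto
  have finA: "finite A" using AV finV finite_subset by blast
  have fs_ge: "f j \<le> fs" if "j \<in> \<tau>" "j \<noteq> \<alpha>" for j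
    unfolding fs_def using that types_fin by (intro Max_ge) auto
  have fa_ge: "f j \<le> f \<alpha>" if "j \<in> \<tau>" for j
    unfolding alpha_max using that types_fin by (intro Max_ge) auto
  have f1: "f j \<ge> 1" if "j \<in> \<tau>" for j using fit that by auto
  have fa1: "f \<alpha> \<ge> 1" using f1 alpha_in by auto
  have Fpos: "F > 0" unfolding F_def total_fitness_def
  proof (rule sum_pos[OF finV])
    show "V \<noteq> {}" using nontriv unfolding types_set_def by auto
    show "\<And>i. i \<in> V \<Longrightarrow> 0 < f (S i)" using f1 state by fastforce
  qed
  have Fle: "F \<le> real n * f \<alpha>" unfolding F_def total_fitness_def n_def
    using sum_bounded_above[of V "\<lambda>u. f (S u)" "f \<alpha>"] fa_ge state by auto
  have nb_sub: "nbhd V E v \<subseteq> V - {v}" for v unfolding nbhd_def using Eirr by auto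
  have d_le: "real (d v) \<le> real n - 1" if "v \<in> V" for v
  proof -
    have "d v \<le> card (V - {v})" unfolding d_def deg_def
      using nb_sub finV by (intro card_mono) auto
    also have "\<dots> = n - 1" using that finV n_def by auto
    finally have "d v \<le> n - 1" .
    moreover have "card V > 0" using that finV card_gt_0_iff by blast
    then have "n \<ge> 1" unfolding n_def by simp
    ultimately show ?thesis by (simp add: of_nat_diff)
  qed
  have d_pos: "real (d v) \<ge> 1" if "E v w" for v w
  proof -
    have "w \<in> nbhd V E v" using that EV unfolding nbhd_def by auto
    then have "d v > 0" unfolding d_def deg_def using finV
      by (metis card_gt_0_iff empty_iff finite_subset nb_sub Diff_subset)
    then show ?thesis by simp
  qed
  obtain u x where uA: "u \<in> A" and xV: "x \<in> V" and xA: "x \<notin> A"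
    using nontriv AV unfolding A_def by blast
  have uV: "u \<in> V" using uA AV by auto
  have path: "(u, x) \<in> {(a, b). E a b}\<^sup>*" using conn uV xV unfolding connected_graph_def by auto
  have "\<And>y. (u, y) \<in> {(a, b). E a b}\<^sup>* \<Longrightarrow> y \<in> A \<or> (\<exists>v w. E v w \<and> v \<in> A \<and> w \<notin> A)"
  proof -
    fix y assume "(u, y) \<in> {(a, b). E a b}\<^sup>*"
    then show "y \<in> A \<or> (\<exists>v w. E v w \<and> v \<in> A \<and> w \<notin> A)"
    proof (induction rule: rtrancl_induct)
      case base then show ?case using uA by auto
    next
      case (step y z) then show ?case by blast
    qed
  qed
  from this[OF path] xA obtain v0 w0 where e0: "E v0 w0" and v0A: "v0 \<in> A" and w0A: "w0 \<notin> A"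
    by blast
  have v0V: "v0 \<in> V" and w0V: "w0 \<in> V" using EV e0 by auto
  have Sv0: "S v0 = \<alpha>" using v0A unfolding A_def types_set_def by auto
  have Sw0: "S w0 \<noteq> \<alpha>" using w0A w0V unfolding A_def types_set_def by auto
  define ind where "ind = (\<lambda>t. if t = \<alpha> then (1::real) else 0)"
  have dPsi: "Psi V E \<alpha> (reproduce S v w) - Psi V E \<alpha> S = (ind (S v) - ind (S w)) / d w"
    if wV: "w \<in> V" for v w
  proof -
    have ts: "types_set V (reproduce S v w) \<alpha> = (if S v = \<alpha> then insert w A else A - {w})"
      using wV unfolding A_def types_set_def reproduce_def by auto
    have P: "Psi V E \<alpha> S = (\<Sum>y\<in>A. 1 / real (d y))" unfolding Psi_def A_def d_def by simp
    have P': "Psi V E \<alpha> (reproduce S v w) = (\<Sum>y\<in>(if S v = \<alpha> then insert w A else A - {w}). 1 / real (d y))"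
      unfolding Psi_def d_def ts by simp
    have wA: "w \<in> A \<longleftrightarrow> S w = \<alpha>" using wV unfolding A_def types_set_def by auto
    show ?thesis
    proof (cases "S v = \<alpha>")
      case True
      then show ?thesis unfolding P P' ind_def using finA wA
        by (cases "w \<in> A") (auto simp: sum.insert_if)
    next
      case False
      then show ?thesis unfolding P P' ind_def using finA wA
        by (cases "w \<in> A") (auto simp: sum_diff1)
    qed
  qed
  define h where "h = (\<lambda>v w. if E v w then f (S v) / F * (1 / real (d v)) * ((ind (S v) - ind (S w)) / d w) else 0)"
  define a where "a = (\<lambda>v w. if E v w \<and> S v = \<alpha> \<and> S w \<noteq> \<alpha> then f (S v) / (F * d v * d w) else (0::real))"
  define b where "b = (\<lambda>v w. if E v w \<and> S v \<noteq> \<alpha> \<and> S w = \<alpha> then f (S v) / (F * d v * d w) else (0::real))"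
  define c where "c = (\<lambda>v w. if E v w \<and> S v = \<alpha> \<and> S w \<noteq> \<alpha> then (f \<alpha> - f (S w)) / (F * d v * d w) else (0::real))"
  have drift1: "moran_drift V E f (Psi V E \<alpha>) S = (\<Sum>v\<in>V. \<Sum>w\<in>V. h v w)"
    unfolding moran_drift_def
  proof (rule sum.cong[OF refl])
    fix v assume "v \<in> V"
    have "(\<Sum>w\<in>nbhd V E v. f (S v) / total_fitness V f S * (1 / real (deg V E v)) *
          (Psi V E \<alpha> (reproduce S v w) - Psi V E \<alpha> S))
        = (\<Sum>w\<in>nbhd V E v. h v w)"
      by (rule sum.cong[OF refl]) (auto simp: nbhd_def h_def dPsi F_def d_def)
    also have "\<dots> = (\<Sum>w\<in>V. h v w)"
      unfolding nbhd_def using finV by (intro sum.mono_neutral_left) (auto simp: h_def)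
    finally show "(\<Sum>w\<in>nbhd V E v. f (S v) / total_fitness V f S * (1 / real (deg V E v)) *
          (Psi V E \<alpha> (reproduce S v w) - Psi V E \<alpha> S)) = (\<Sum>w\<in>V. h v w)" .
  qed
  have hab: "h v w = a v w - b v w" for v w
    unfolding h_def a_def b_def ind_def by auto
  have sb: "(\<Sum>v\<in>V. \<Sum>w\<in>V. b v w) = (\<Sum>v\<in>V. \<Sum>w\<in>V. b w v)"
    by (rule sum.swap)
  have bsw: "a v w - b w v = c v w" for v w
    unfolding a_def b_def c_def using Esym by (auto simp: mult.commute mult.left_commute diff_divide_distrib)
  have drift: "moran_drift V E f (Psi V E \<alpha>) S = (\<Sum>v\<in>V. \<Sum>w\<in>V. c v w)"
  proof -
    have "moran_drift V E f (Psi V E \<alpha>) S = (\<Sum>v\<in>V. \<Sum>w\<in>V. a v w) - (\<Sum>v\<in>V. \<Sum>w\<in>V. b v w)"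
      unfolding drift1 hab by (simp add: sum_subtractf)
    also have "\<dots> = (\<Sum>v\<in>V. \<Sum>w\<in>V. a v w - b w v)"
      unfolding sb by (simp add: sum_subtractf)
    finally show ?thesis unfolding bsw .
  qed
  have c_nn: "c v w \<ge> 0" if "v \<in> V" "w \<in> V" for v w
  proof -
    have "E v w \<Longrightarrow> f (S w) \<le> f \<alpha>" using fa_ge state that by auto
    then show ?thesis unfolding c_def using Fpos by (auto intro!: divide_nonneg_pos)
  qed
  have "c v0 w0 \<le> (\<Sum>w\<in>V. c v0 w)"
    using c_nn v0V w0V finV by (intro member_le_sum) auto
  also have "\<dots> \<le> (\<Sum>v\<in>V. \<Sum>w\<in>V. c v w)"
    using c_nn v0V finV by (intro member_le_sum[of v0 V "\<lambda>v. \<Sum>w\<in>V. c v w"] sum_nonneg) auto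
  finally have main: "c v0 w0 \<le> moran_drift V E f (Psi V E \<alpha>) S" using drift by simp
  have fw0: "f (S w0) \<le> fs" using fs_ge state w0V Sw0 by auto
  have fsa: "fs < f \<alpha>" using fstar fs_def by simp
  have dv: "1 \<le> real (d v0)" "real (d v0) \<le> real n - 1" using d_pos e0 d_le v0V by auto
  have dw: "1 \<le> real (d w0)" "real (d w0) \<le> real n - 1" using d_pos Esym e0 d_le w0V by blast+
  have c0: "c v0 w0 = (f \<alpha> - f (S w0)) / (F * d v0 * d w0)" unfolding c_def using e0 Sv0 Sw0 by auto
  have "(f \<alpha> - fs) / (F * d v0 * d w0) \<le> c v0 w0"
    unfolding c0 using fw0 Fpos dv dw by (intro divide_right_mono) auto
  have step1: "(f \<alpha> - fs) / (F * d v0 * d w0) \<le> c v0 w0"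
    unfolding c0 using fw0 Fpos dv dw by (intro divide_right_mono) auto
  have dd: "F * d v0 * d w0 \<le> (real n * f \<alpha>) * (real n - 1) * (real n - 1)"
    using Fle Fpos dv dw by (intro mult_mono) auto
  have step2: "(f \<alpha> - fs) / ((real n * f \<alpha>) * (real n - 1) * (real n - 1)) \<le> (f \<alpha> - fs) / (F * d v0 * d w0)"
  proof -
    have p1: "F * d v0 * d w0 > 0" using Fpos dv dw by simp
    then have "(real n * f \<alpha>) * (real n - 1) * (real n - 1) > 0" using dd by linarith
    then show ?thesis using dd fsa p1 by (intro divide_left_mono) auto
  qed
  have npos: "real n \<ge> 2" using dv by linarith
  have lt: "(real n * f \<alpha>) * (real n - 1) * (real n - 1) < f \<alpha> * real n ^ 3"
  proof -
    have "(real n - 1) * (real n - 1) < real n * real n" using npos by (simp add: algebra_simps)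
    then have "(real n * f \<alpha>) * ((real n - 1) * (real n - 1)) < (real n * f \<alpha>) * (real n * real n)"
      using npos fa1 by (intro mult_strict_left_mono) auto
    then show ?thesis by (simp add: power3_eq_cube algebra_simps)
  qed
  have step3: "(f \<alpha> - fs) / (f \<alpha> * real n ^ 3) < (f \<alpha> - fs) / ((real n * f \<alpha>) * (real n - 1) * (real n - 1))"
    using lt fsa npos fa1 by (intro divide_strict_left_mono) auto
  have rhs: "(1 - Max (f ` (\<tau> - {\<alpha>})) / Max (f ` \<tau>)) / real (card V) ^ 3 = (f \<alpha> - fs) / (f \<alpha> * real n ^ 3)"
    unfolding fs_def[symmetric] alpha_max[symmetric] n_def[symmetric] using fa1
    by (simp add: field_simps)
  show ?thesis unfolding rhs using step1 step2 step3 main by linarith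
qed

end
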